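(* The Gaussian lattice $\Lambda_{1,6}$ has a $\mathcal G$-basis $e_1,\dots,e_7$ indexed by the nodes of the $E_7$ Coxeter diagram such that $h(e_j,e_j)=-2$, $h(e_j,e_k)=1+i$ and $h(e_k,e_j)=1-i$ whenever $j<k$ are joined in the diagram, and $h(e_j,e_k)=0$ when $j\ne k$ are not joined.
   Context: Let $\mathcal G=\mathbb Z[i]$. $\Lambda_{1,6}=\mathcal G^7$ with Hermitian form $h(x,y)=\bar x^tHy$, $H=\begin{pmatrix}-2&1+i\\1-i&-2\end{pmatrix}^{\oplus3}\oplus(2)$ (block diagonal). The $E_7$ Coxeter diagram has nodes $1,\dots,7$, with edges $1\!-\!2,\ 2\!-\!3,\ 3\!-\!4,\ 4\!-\!5,\ 5\!-\!6$ and $3\!-\!7$. *)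

theory Defs
  imports Complex_Main
begin

definition gauss_ints :: "complex set" where
  "gauss_ints = {z. Re z \<in> \<int> \<and> Im z \<in> \<int>}"

text \<open>Vectors of C^7 are modelled as functions nat => complex with coordinates
  indexed by 1..7 and vanishing outside {1..7}.  The lattice Lambda_{1,6} = G^7.\<close>
definition vec7 :: "(nat \<Rightarrow> complex) set" where
  "vec7 = {x. \<forall>i. i \<notin> {1..7} \<longrightarrow> x i = 0}"

definition Lambda16 :: "(nat \<Rightarrow> complex) set" where
  "Lambda16 = {x. x \<in> vec7 \<and> (\<forall>i\<in>{1..7}. x i \<in> gauss_ints)}"

text \<open>The Gram matrix H = [[-2,1+i],[1-i,-2]]^(+3) (+) (2), 1-indexed.\<close>
definition Hmat :: "nat \<Rightarrow> nat \<Rightarrow> complex" where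
  "Hmat j k =
     (if j = k \<and> j \<in> {1..6} then -2
      else if j = 7 \<and> k = 7 then 2
      else if (j, k) \<in> {(1,2),(3,4),(5,6)} then 1 + \<i>
      else if (j, k) \<in> {(2,1),(4,3),(6,5)} then 1 - \<i>
      else 0)"

definition herm :: "(nat \<Rightarrow> complex) \<Rightarrow> (nat \<Rightarrow> complex) \<Rightarrow> complex" where
  "herm x y = (\<Sum>j\<in>{1..7}. \<Sum>k\<in>{1..7}. cnj (x j) * Hmat j k * y k)"

definition G_basis :: "(nat \<Rightarrow> nat \<Rightarrow> complex) \<Rightarrow> bool" where
  "G_basis e \<longleftrightarrow> (\<forall>j\<in>{1..7}. e j \<in> Lambda16) \<and>
     (\<forall>x\<in>Lambda16. \<exists>!c. (\<forall>j\<in>{1..7}. c j \<in> gauss_ints) \<and> (\<forall>j. j \<notin> {1..7} \<longrightarrow> c j = 0) \<and>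
         x = (\<lambda>i. \<Sum>j\<in>{1..7}. c j * e j i))"

definition E7_joined :: "nat \<Rightarrow> nat \<Rightarrow> bool" where
  "E7_joined j k \<longleftrightarrow> {j, k} \<in> {{1,2},{2,3},{3,4},{4,5},{5,6},{3,7}}"

end

theory Submission
  imports Defs
begin

definition EL :: "complex list list" where "EL = [[Complex 1 0, Complex 1 0, Complex 0 0, Complex 0 0, Complex 1 0, Complex 1 0, Complex (-1) 0],
  [Complex 0 (-1), Complex 0 0, Complex 0 1, Complex 0 1, Complex 0 0, Complex 0 0, Complex (-1) 0],
  [Complex 0 0, Complex 0 0, Complex 0 (-1), Complex 0 0, Complex 0 0, Complex 0 0, Complex 0 0],
  [Complex 0 0, Complex 0 0, Complex (-1) 0, Complex (-1) 0, Complex 0 1, Complex 0 1, Complex 0 (-1)],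
  [Complex 0 1, Complex 0 0, Complex 0 0, Complex 0 0, Complex 0 0, Complex 0 (-1), Complex 1 0],
  [Complex 0 0, Complex 0 0, Complex 0 0, Complex 0 0, Complex 0 (-1), Complex (-1) 0, Complex 0 0],
  [Complex 0 0, Complex 0 0, Complex 0 1, Complex 1 0, Complex 0 0, Complex 0 0, Complex 0 0]]"
definition FL :: "complex list list" where "FL = [[Complex 0 0, Complex 1 0, Complex 0 0, Complex 0 0, Complex 0 0, Complex 0 0, Complex 0 0],
  [Complex (-1) 0, Complex 1 0, Complex 0 0, Complex 0 0, Complex (-1) 0, Complex 0 1, Complex (-1) 1],
  [Complex (-2) 0, Complex 1 1, Complex 0 1, Complex 1 0, Complex (-1) 1, Complex 1 1, Complex (-1) 3],
  [Complex (-1) 0, Complex 1 1, Complex 0 0, Complex 0 0, Complex 0 0, Complex 0 0, Complex 0 1],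
  [Complex (-1) (-1), Complex 1 1, Complex 0 0, Complex 0 0, Complex (-1) 0, Complex 0 1, Complex (-1) 1],
  [Complex (-1) 0, Complex 1 0, Complex 0 0, Complex 0 0, Complex 0 1, Complex 0 0, Complex 0 1],
  [Complex (-1) 1, Complex 1 0, Complex 0 0, Complex 1 0, Complex 0 1, Complex 1 0, Complex 1 2]]"

definition ee :: "nat \<Rightarrow> nat \<Rightarrow> complex" where
  "ee j i = (if j \<in> {1..7} \<and> i \<in> {1..7} then EL ! (j - 1) ! (i - 1) else 0)"
definition ff :: "nat \<Rightarrow> nat \<Rightarrow> complex" where
  "ff j i = (if j \<in> {1..7} \<and> i \<in> {1..7} then FL ! (j - 1) ! (i - 1) else 0)"

lemma sum7: "(\<Sum>j\<in>{1..7::nat}. f j) = f 1 + f 2 + f 3 + f 4 + f 5 + f 6 + f 7"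
  by (simp add: numeral_eq_Suc atLeastAtMostSuc_conv add.commute add.left_commute)

lemma ball7: "(\<forall>j\<in>{1..7::nat}. P j) \<longleftrightarrow> P 1 \<and> P 2 \<and> P 3 \<and> P 4 \<and> P 5 \<and> P 6 \<and> P 7"
proof -
  have "{1..7::nat} = {1,2,3,4,5,6,7}" by auto
  then show ?thesis by simp
qed

lemma E7j: "E7_joined j k \<longleftrightarrow> (j,k) \<in> {(1,2),(2,1),(2,3),(3,2),(3,4),(4,3),(4,5),(5,4),(5,6),(6,5),(3,7),(7,3)}"
  unfolding E7_joined_def by (auto simp: doubleton_eq_iff)

lemma herm_facts:
  "(\<forall>j\<in>{1..7}. herm (ee j) (ee j) = -2) \<and>
    (\<forall>j\<in>{1..7}. \<forall>k\<in>{1..7}. j < k \<and> E7_joined j k \<longrightarrow>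
        herm (ee j) (ee k) = 1 + \<i> \<and> herm (ee k) (ee j) = 1 - \<i>) \<and>
    (\<forall>j\<in>{1..7}. \<forall>k\<in>{1..7}. j \<noteq> k \<and> \<not> E7_joined j k \<longrightarrow> herm (ee j) (ee k) = 0)"
  unfolding ball7 herm_def sum7
  by (simp add: ee_def EL_def Hmat_def E7j complex_eq_iff)

lemma MF: "\<forall>i\<in>{1..7}. \<forall>l\<in>{1..7}. (\<Sum>j\<in>{1..7}. ee j i * ff j l) = (if i = l then 1 else 0)"
  unfolding ball7 sum7 by (simp add: ee_def ff_def EL_def FL_def complex_eq_iff)

lemma FM: "\<forall>j\<in>{1..7}. \<forall>k\<in>{1..7}. (\<Sum>i\<in>{1..7}. ff j i * ee k i) = (if j = k then 1 else 0)"
  unfolding ball7 sum7 by (simp add: ee_def ff_def EL_def FL_def complex_eq_iff)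

lemma gauss_Complex: "a \<in> \<int> \<Longrightarrow> b \<in> \<int> \<Longrightarrow> Complex a b \<in> gauss_ints"
  by (simp add: gauss_ints_def)
lemma gauss_0: "0 \<in> gauss_ints" by (simp add: gauss_ints_def)
lemma gauss_add: "a \<in> gauss_ints \<Longrightarrow> b \<in> gauss_ints \<Longrightarrow> a + b \<in> gauss_ints"
  by (simp add: gauss_ints_def)
lemma gauss_mult: "a \<in> gauss_ints \<Longrightarrow> b \<in> gauss_ints \<Longrightarrow> a * b \<in> gauss_ints"
  by (simp add: gauss_ints_def)
lemma gauss_sum: "(\<And>i. i \<in> A \<Longrightarrow> f i \<in> gauss_ints) \<Longrightarrow> sum f A \<in> gauss_ints"
  by (induction A rule: infinite_finite_induct) (auto intro: gauss_0 gauss_add)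

lemma ee_in: "\<forall>j\<in>{1..7}. ee j \<in> Lambda16"
proof -
  have "\<forall>j\<in>{1..7}. \<forall>i\<in>{1..7}. ee j i \<in> gauss_ints"
    unfolding ball7 by (simp add: ee_def EL_def gauss_Complex)
  then show ?thesis by (auto simp: Lambda16_def vec7_def ee_def)
qed

lemma ff_in: "ff j i \<in> gauss_ints"
proof -
  have "\<forall>j\<in>{1..7}. \<forall>i\<in>{1..7}. ff j i \<in> gauss_ints"
    unfolding ball7 by (simp add: ff_def FL_def gauss_Complex)
  then show ?thesis by (cases "j \<in> {1..7} \<and> i \<in> {1..7}") (auto simp: ff_def gauss_0)
qed

lemma Gb: "G_basis ee"
  unfolding G_basis_def
proof (intro conjI ballI)
  show "\<And>j. j \<in> {1..7} \<Longrightarrow> ee j \<in> Lambda16" using ee_in by blast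
  fix x assume x: "x \<in> Lambda16"
  have x0: "\<And>i. i \<notin> {1..7} \<Longrightarrow> x i = 0" using x by (auto simp: Lambda16_def vec7_def)
  have xg: "\<And>i. i \<in> {1..7} \<Longrightarrow> x i \<in> gauss_ints" using x by (auto simp: Lambda16_def)
  define c where "c j = (if j \<in> {1..7} then \<Sum>i\<in>{1..7}. ff j i * x i else 0)" for j
  have cg: "\<forall>j\<in>{1..7}. c j \<in> gauss_ints"
    by (auto simp: c_def intro!: gauss_sum gauss_mult ff_in xg)
  have c0: "\<forall>j. j \<notin> {1..7} \<longrightarrow> c j = 0" by (simp add: c_def)
  have rep: "x = (\<lambda>i. \<Sum>j\<in>{1..7}. c j * ee j i)"
  proof
    fix i show "x i = (\<Sum>j\<in>{1..7}. c j * ee j i)"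
    proof (cases "i \<in> {1..7}")
      case False then have "\<And>j. ee j i = 0" unfolding ee_def by auto
      then show ?thesis using False by (simp add: x0)
    next
      case True
      have "(\<Sum>j\<in>{1..7}. c j * ee j i) = (\<Sum>j\<in>{1..7}. \<Sum>l\<in>{1..7}. x l * (ee j i * ff j l))"
        by (auto simp: c_def sum_distrib_right sum_distrib_left mult_ac intro!: sum.cong)
      also have "\<dots> = (\<Sum>l\<in>{1..7}. x l * (\<Sum>j\<in>{1..7}. ee j i * ff j l))"
        by (subst sum.swap) (simp add: sum_distrib_left)
      also have "\<dots> = (\<Sum>l\<in>{1..7}. (if i = l then x l else 0))"
        using MF True by (intro sum.cong) auto
      also have "\<dots> = x i" using True by simp
      finally show ?thesis by simp
    qed
  qed
  show "\<exists>!c. (\<forall>j\<in>{1..7}. c j \<in> gauss_ints) \<and> (\<forall>j. j \<notin> {1..7} \<longrightarrow> c j = 0) \<and>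
         x = (\<lambda>i. \<Sum>j\<in>{1..7}. c j * ee j i)"
  proof (rule ex1I[of _ c])
    show "(\<forall>j\<in>{1..7}. c j \<in> gauss_ints) \<and> (\<forall>j. j \<notin> {1..7} \<longrightarrow> c j = 0) \<and>
         x = (\<lambda>i. \<Sum>j\<in>{1..7}. c j * ee j i)" using cg c0 rep by blast
    fix d assume d: "(\<forall>j\<in>{1..7}. d j \<in> gauss_ints) \<and> (\<forall>j. j \<notin> {1..7} \<longrightarrow> d j = 0) \<and>
         x = (\<lambda>i. \<Sum>j\<in>{1..7}. d j * ee j i)"
    show "d = c"
    proof
      fix j show "d j = c j"
      proof (cases "j \<in> {1..7}")
        case False then show ?thesis using d unfolding c_def by auto
      next
        case True
        have "c j = (\<Sum>i\<in>{1..7}. ff j i * (\<Sum>k\<in>{1..7}. d k * ee k i))"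
          using True d by (simp add: c_def)
        also have "\<dots> = (\<Sum>k\<in>{1..7}. d k * (\<Sum>i\<in>{1..7}. ff j i * ee k i))"
          by (simp add: sum_distrib_left mult_ac) (subst sum.swap, simp)
        also have "\<dots> = (\<Sum>k\<in>{1..7}. (if j = k then d k else 0))"
          using FM True by (intro sum.cong) auto
        also have "\<dots> = d j" using True by simp
        finally show ?thesis by simp
      qed
    qed
  qed
qed

theorem lemma4p14:
  shows "\<exists>e. G_basis e \<and>
    (\<forall>j\<in>{1..7}. herm (e j) (e j) = -2) \<and>
    (\<forall>j\<in>{1..7}. \<forall>k\<in>{1..7}. j < k \<and> E7_joined j k \<longrightarrow>
        herm (e j) (e k) = 1 + \<i> \<and> herm (e k) (e j) = 1 - \<i>) \<and>
    (\<forall>j\<in>{1..7}. \<forall>k\<in>{1..7}. j \<noteq> k \<and> \<not> E7_joined j k \<longrightarrow> herm (e j) (e k) = 0)"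
  using Gb herm_facts by blast

end
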